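(* Let $\delta:\,]0,+\infty[\to\mathbb R$ be nonnegative, bounded and continuously differentiable with $\lim_{r\downarrow0}\sqrt r\,\delta'(r)=0$ (so that $u\mapsto\delta(u^2)$ extends to a continuously differentiable function on $\mathbb R$). Consider the system $$u''+\delta(u^2)u^2u'=\frac{Eu}{2},\qquad E'=-4\delta(u^2)(u')^2,$$ and the invariant manifold $\mathcal M=\{(u,u',E)\in\mathbb R\times\mathbb R\times\mathbb R:\ 2(u')^2-Eu^2=1\}$. Let $(u,E):\,]A,0]\to\mathbb R^2$ be a solution of this system lying on $\mathcal M$ and maximal to the left. If $A>-\infty$, then there exists $s_1\in\,]A,0]$ such that $u'(s)u(s)<0$ for all $s\in\,]A,s_1]$.
   Context: Primes denote derivatives with respect to the independent variable $s$. Maximal to the left means the solution admits no extension to an interval $]\hat A,0]$ with $\hat A<A$. *)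

theory Defs
  imports "HOL-Analysis.Analysis"
begin

text \<open>Extension of delta to r = 0 by its right limit (exists under the hypotheses),
  so that u maps to delta(u^2) is defined on all of the reals.\<close>
definition dext :: "(real \<Rightarrow> real) \<Rightarrow> real \<Rightarrow> real" where
  "dext \<delta> r = (if r > 0 then \<delta> r else Lim (at_right 0) \<delta>)"

definition is_sol :: "(real \<Rightarrow> real) \<Rightarrow> real \<Rightarrow> (real \<Rightarrow> real) \<Rightarrow> (real \<Rightarrow> real) \<Rightarrow> (real \<Rightarrow> real) \<Rightarrow> bool" where
  "is_sol \<delta> a u v E \<longleftrightarrow>
     (\<forall>s\<in>{a<..0}.
        (u has_real_derivative v s) (at s within {a<..0}) \<and>
        (v has_real_derivative (E s * u s / 2 - dext \<delta> ((u s)\<^sup>2) * (u s)\<^sup>2 * v s)) (at s within {a<..0}) \<and>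
        (E has_real_derivative (- 4 * dext \<delta> ((u s)\<^sup>2) * (v s)\<^sup>2)) (at s within {a<..0}))"

definition on_M :: "real \<Rightarrow> (real \<Rightarrow> real) \<Rightarrow> (real \<Rightarrow> real) \<Rightarrow> (real \<Rightarrow> real) \<Rightarrow> bool" where
  "on_M a u v E \<longleftrightarrow> (\<forall>s\<in>{a<..0}. 2 * (v s)\<^sup>2 - E s * (u s)\<^sup>2 = 1)"

definition maximal_left :: "(real \<Rightarrow> real) \<Rightarrow> real \<Rightarrow> (real \<Rightarrow> real) \<Rightarrow> (real \<Rightarrow> real) \<Rightarrow> (real \<Rightarrow> real) \<Rightarrow> bool" where
  "maximal_left \<delta> a u v E \<longleftrightarrow>
     \<not> (\<exists>a' u2 v2 E2. a' < a \<and> is_sol \<delta> a' u2 v2 E2 \<and>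
          (\<forall>s\<in>{a<..0}. u2 s = u s \<and> v2 s = v s \<and> E2 s = E s))"

end

theory Submission
  imports Defs "HOL-Analysis.Analysis" "HOL-Real_Asymp.Real_Asymp"
begin

lemma picard_local:
  fixes G :: "'a::euclidean_space \<Rightarrow> 'a" and y0 :: 'a
  assumes R: "R > 0"
    and lip: "\<And>x y. x \<in> cball y0 R \<Longrightarrow> y \<in> cball y0 R \<Longrightarrow> norm (G x - G y) \<le> L * norm (x - y)"
    and bnd: "\<And>x. x \<in> cball y0 R \<Longrightarrow> norm (G x) \<le> M"
  shows "\<exists>h>0. \<exists>z. z 0 = y0 \<and> (\<forall>t\<in>{0..h}. (z has_vector_derivative G (z t)) (at t within {0..h}))"
proof -
  define M' where "M' = max M 0 + 1"
  define L' where "L' = max L 0 + 1"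
  define h where "h = min (R / M') (1 / (2 * L'))"
  have M'pos: "M' > 0" and L'pos: "L' > 0" unfolding M'_def L'_def by auto
  have hpos: "h > 0" unfolding h_def using R M'pos L'pos by auto
  have "h \<le> R / M'" unfolding h_def by auto
  hence hM: "M' * h \<le> R" using M'pos by (simp add: field_simps)
  have "h \<le> 1 / (2 * L')" unfolding h_def by auto
  hence hL: "L' * h \<le> 1/2" using L'pos by (simp add: field_simps)
  have lip': "norm (G x - G y) \<le> L' * norm (x - y)" if "x \<in> cball y0 R" "y \<in> cball y0 R" for x y
  proof -
    have "norm (G x - G y) \<le> L * norm (x - y)" using lip that .
    also have "\<dots> \<le> L' * norm (x - y)" unfolding L'_def
      by (intro mult_right_mono) auto
    finally show ?thesis .
  qed
  have bnd': "norm (G x) \<le> M'" if "x \<in> cball y0 R" for x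
    using bnd[OF that] unfolding M'_def by auto
  have contG: "continuous_on (cball y0 R) G"
  proof (rule lipschitz_on_continuous_on)
    show "L'-lipschitz_on (cball y0 R) G"
      using lip' L'pos by (intro lipschitz_onI) (auto simp: dist_norm)
  qed
  define cl where "cl t = max 0 (min h t)" for t
  have cl_in: "cl t \<in> {0..h}" for t using hpos unfolding cl_def by auto
  have cl_id: "t \<in> {0..h} \<Longrightarrow> cl t = t" for t unfolding cl_def by auto
  have cont_cl: "continuous_on UNIV cl" unfolding cl_def by (intro continuous_intros)
  define S :: "(real \<Rightarrow>\<^sub>C 'a) set" where "S = PiC UNIV (\<lambda>_. cball y0 R)"
  have memS: "x \<in> S \<longleftrightarrow> (\<forall>t. apply_bcontfun x t \<in> cball y0 R)" for x
    unfolding S_def mem_PiC_iff by auto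
  define \<phi> where "\<phi> x t = y0 + integral {0..cl t} (\<lambda>\<tau>. G (apply_bcontfun x \<tau>))" for x t
  have contGx: "continuous_on UNIV (\<lambda>\<tau>. G (apply_bcontfun x \<tau>))" if "x \<in> S" for x
    by (rule continuous_on_compose2[OF contG]) (use that memS in auto)
  have phi_props: "\<phi> x \<in> bcontfun \<and> (\<forall>t. \<phi> x t \<in> cball y0 R)" if "x \<in> S" for x
  proof -
    have c1: "continuous_on {0..h} (\<lambda>s. integral {0..s} (\<lambda>\<tau>. G (apply_bcontfun x \<tau>)))"
      by (rule indefinite_integral_continuous_1, rule integrable_continuous_interval)
        (rule continuous_on_subset[OF contGx[OF that]], auto)
    have c2: "continuous_on UNIV (\<phi> x)" unfolding \<phi>_def
      by (intro continuous_intros continuous_on_compose2[OF c1 cont_cl]) (use cl_in in auto)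
    have nb: "norm (\<phi> x t - y0) \<le> R" for t
    proof -
      have "norm (integral {0..cl t} (\<lambda>\<tau>. G (apply_bcontfun x \<tau>))) \<le> M' * (cl t - 0)"
        by (rule integral_bound) (use cl_in[of t] that memS in
            \<open>auto intro: bnd' continuous_on_subset[OF contGx[OF that]]\<close>)
      also have "\<dots> \<le> M' * h" using cl_in[of t] M'pos by (intro mult_left_mono) auto
      finally show ?thesis using hM unfolding \<phi>_def by simp
    qed
    have "norm (\<phi> x t) \<le> norm y0 + R" for t
      using nb[of t] norm_triangle_ineq2[of "\<phi> x t" y0] by linarith
    hence "\<phi> x \<in> bcontfun" by (intro bcontfun_normI c2)
    moreover have "\<phi> x t \<in> cball y0 R" for t using nb[of t] by (simp add: dist_norm norm_minus_commute)
    ultimately show ?thesis by auto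
  qed
  define P where "P x = Bcontfun (\<phi> x)" for x
  have P_apply: "apply_bcontfun (P x) = \<phi> x" if "x \<in> S" for x
    unfolding P_def using phi_props[OF that] by (simp add: Bcontfun_inverse)
  have "\<exists>!x\<in>S. P x = x"
  proof (rule Banach_fix)
    show "complete S" unfolding S_def complete_eq_closed by (rule closed_PiC) auto
    have "const_bcontfun y0 \<in> S" unfolding memS using R by (simp add: const_bcontfun.rep_eq)
    thus "S \<noteq> {}" by auto
    show "(0::real) \<le> 1/2" "(1/2::real) < 1" by auto
    show "P ` S \<subseteq> S" using P_apply phi_props memS by auto
    show "dist (P x) (P y) \<le> 1/2 * dist x y" if xS: "x \<in> S" and yS: "y \<in> S" for x y
    proof (rule dist_bound)
      fix t
      have "\<phi> x t - \<phi> y t = integral {0..cl t} (\<lambda>\<tau>. G (apply_bcontfun x \<tau>) - G (apply_bcontfun y \<tau>))"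
        unfolding \<phi>_def
        by (subst integral_diff)
          (auto intro!: integrable_continuous_interval continuous_on_subset[OF contGx[OF xS]]
            continuous_on_subset[OF contGx[OF yS]])
      moreover have "norm (integral {0..cl t} (\<lambda>\<tau>. G (apply_bcontfun x \<tau>) - G (apply_bcontfun y \<tau>))) \<le> (L' * dist x y) * (cl t - 0)"
        apply (rule integral_bound)
        using cl_in[of t] apply simp
         apply (intro continuous_intros continuous_on_subset[OF contGx[OF xS]]
            continuous_on_subset[OF contGx[OF yS]]; simp)
      proof -
        fix \<tau>
        have "norm (G (apply_bcontfun x \<tau>) - G (apply_bcontfun y \<tau>)) \<le> L' * norm (apply_bcontfun x \<tau> - apply_bcontfun y \<tau>)"
          using lip' xS yS memS by auto
        also have "\<dots> \<le> L' * dist x y" using dist_bounded[of x \<tau> y] L'pos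
          by (intro mult_left_mono) (auto simp: dist_norm)
        finally show "norm (G (apply_bcontfun x \<tau>) - G (apply_bcontfun y \<tau>)) \<le> L' * dist x y" .
      qed
      ultimately have "norm (\<phi> x t - \<phi> y t) \<le> (L' * dist x y) * (cl t - 0)" by simp
      also have "\<dots> \<le> (L' * dist x y) * h" using cl_in[of t] L'pos
        by (intro mult_left_mono) auto
      also have "\<dots> = (L' * h) * dist x y" by simp
      also have "\<dots> \<le> 1/2 * dist x y" using hL by (intro mult_right_mono) auto
      finally show "dist (P x t) (P y t) \<le> 1/2 * dist x y"
        using P_apply xS yS by (simp add: dist_norm)
    qed
  qed
  then obtain x where xS: "x \<in> S" and fixP: "P x = x" by auto
  define z where "z = apply_bcontfun x"
  have zeq: "z t = y0 + integral {0..t} (\<lambda>\<tau>. G (z \<tau>))" if "t \<in> {0..h}" for t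
    using P_apply[OF xS] fixP cl_id[OF that] unfolding z_def \<phi>_def by metis
  have "z 0 = y0" using zeq[of 0] hpos by simp
  moreover have "(z has_vector_derivative G (z t)) (at t within {0..h})" if "t \<in> {0..h}" for t
  proof (rule has_vector_derivative_transform[OF that zeq])
    show "((\<lambda>s. y0 + integral {0..s} (\<lambda>\<tau>. G (z \<tau>))) has_vector_derivative G (z t)) (at t within {0..h})"
      apply (subst add.commute, subst has_vector_derivative_add_const)
      apply (rule integral_has_vector_derivative[OF _ that])
      using continuous_on_subset[OF contGx[OF xS]] by (auto simp: z_def)
  qed
  ultimately show ?thesis using hpos by blast
qed

locale delta_ok =
  fixes \<delta> \<delta>' :: "real \<Rightarrow> real" and K :: real
  assumes nonneg: "\<forall>r>0. \<delta> r \<ge> 0"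
    and bndK: "\<forall>r>0. \<bar>\<delta> r\<bar> \<le> K"
    and deriv: "\<forall>r>0. (\<delta> has_real_derivative \<delta>' r) (at r)"
    and cont_deriv: "continuous_on {0<..} \<delta>'"
    and lim0: "((\<lambda>r. sqrt r * \<delta>' r) \<longlongrightarrow> 0) (at_right 0)"
begin

definition hh where "hh t = \<delta> (t\<^sup>2)"
definition ph where "ph t = \<delta>' (t\<^sup>2) * (2 * t)"

lemma hh_deriv: "t > 0 \<Longrightarrow> (hh has_real_derivative ph t) (at t)"
  unfolding hh_def ph_def
  by (rule DERIV_chain2[where f=\<delta>]) (use deriv in \<open>auto intro!: derivative_eq_intros\<close>)

lemma ph_lim: "(ph \<longlongrightarrow> 0) (at_right 0)"
proof -
  have sq: "filterlim (\<lambda>t::real. t\<^sup>2) (at_right 0) (at_right 0)" by real_asymp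
  have "((\<lambda>t. sqrt (t\<^sup>2) * \<delta>' (t\<^sup>2)) \<longlongrightarrow> 0) (at_right 0)"
    using filterlim_compose[OF lim0 sq] .
  hence "((\<lambda>t. 2 * (sqrt (t\<^sup>2) * \<delta>' (t\<^sup>2))) \<longlongrightarrow> 0) (at_right 0)"
    using tendsto_mult_right_zero by blast
  moreover have "eventually (\<lambda>t. 2 * (sqrt (t\<^sup>2) * \<delta>' (t\<^sup>2)) = ph t) (at_right 0)"
    unfolding eventually_at_right_field ph_def by (rule exI[of _ 1]) auto
  ultimately show ?thesis by (rule Lim_transform_eventually)
qed

lemma ph_bounded: assumes "R > 0" shows "\<exists>M\<ge>0. \<forall>t\<in>{0<..R}. \<bar>ph t\<bar> \<le> M"
proof -
  have "eventually (\<lambda>t. dist (ph t) 0 < 1) (at_right 0)"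
    using ph_lim by (rule tendstoD) simp
  then obtain b where b: "b > 0" "\<And>t. t > 0 \<Longrightarrow> t < b \<Longrightarrow> \<bar>ph t\<bar> < 1"
    unfolding eventually_at_right_field by auto
  define e where "e = min (b/2) R"
  have e: "e > 0" "e < b" "e \<le> R" unfolding e_def using b assms by auto
  have "continuous_on {e..R} ph" unfolding ph_def
    by (intro continuous_intros continuous_on_compose2[OF cont_deriv]) (use e in auto)
  hence "compact (ph ` {e..R})" by (intro compact_continuous_image) auto
  hence "bounded (ph ` {e..R})" by (rule compact_imp_bounded)
  then obtain B where "\<forall>y\<in>ph ` {e..R}. norm y \<le> B" unfolding bounded_iff by auto
  hence B: "\<And>t. t \<in> {e..R} \<Longrightarrow> \<bar>ph t\<bar> \<le> B" by auto
  show ?thesis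
  proof (intro exI[of _ "max 1 B"] conjI ballI)
    fix t assume t: "t \<in> {0<..R}"
    show "\<bar>ph t\<bar> \<le> max 1 B"
    proof (cases "t < e")
      case True thus ?thesis using b(2)[of t] t e by auto
    next
      case False thus ?thesis using B[of t] t by auto
    qed
  qed auto
qed

lemma hh_lip: assumes "R > 0" shows "\<exists>M\<ge>0. \<forall>a\<in>{0<..R}. \<forall>b\<in>{0<..R}. \<bar>hh a - hh b\<bar> \<le> M * \<bar>a - b\<bar>"
proof -
  obtain M where M: "M \<ge> 0" "\<And>t. t\<in>{0<..R} \<Longrightarrow> \<bar>ph t\<bar> \<le> M" using ph_bounded[OF assms] by auto
  have *: "\<bar>hh b - hh a\<bar> \<le> M * \<bar>b - a\<bar>" if "a\<in>{0<..R}" "b\<in>{0<..R}" "a < b" for a b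
  proof -
    have "DERIV hh x :> ph x" if "a \<le> x" "x \<le> b" for x
      using hh_deriv that \<open>a \<in> {0<..R}\<close> by auto
    from MVT2[OF \<open>a < b\<close> this] obtain z where z: "a < z" "z < b" "hh b - hh a = (b - a) * ph z"
      by blast
    have "\<bar>hh b - hh a\<bar> = \<bar>b - a\<bar> * \<bar>ph z\<bar>" using z by (simp add: abs_mult)
    also have "\<dots> \<le> \<bar>b - a\<bar> * M" using M(2)[of z] z that by (intro mult_left_mono) auto
    finally show ?thesis by (simp add: mult.commute)
  qed
  show ?thesis
  proof (intro exI[of _ M] conjI ballI)
    fix a b assume ab: "a \<in> {0<..R}" "b \<in> {0<..R}"
    consider "a < b" | "a = b" | "b < a" by linarith
    thus "\<bar>hh a - hh b\<bar> \<le> M * \<bar>a - b\<bar>"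
    proof cases
      case 1 thus ?thesis using *[OF ab(1,2)] by (simp add: abs_minus_commute)
    next
      case 2 thus ?thesis by simp
    next
      case 3 thus ?thesis using *[OF ab(2,1)] by simp
    qed
  qed (use M in auto)
qed

lemma delta_lim: "\<exists>l. (\<delta> \<longlongrightarrow> l) (at_right 0)"
proof -
  obtain M where M: "M \<ge> 0" "\<forall>a\<in>{0<..1}. \<forall>b\<in>{0<..1}. \<bar>hh a - hh b\<bar> \<le> M * \<bar>a - b\<bar>"
    using hh_lip[of 1] by auto
  have "M-lipschitz_on {0<..1} hh" using M by (intro lipschitz_onI) (auto simp: dist_real_def)
  hence "uniformly_continuous_on {0<..1} hh" by (rule lipschitz_on_uniformly_continuous)
  moreover have "(0::real) \<in> closure {0<..1}" by (simp add: closure_greaterThanAtMost)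
  ultimately obtain l where l: "(hh \<longlongrightarrow> l) (at 0 within {0<..1})"
    by (rule uniformly_continuous_on_extension_at_closure)
  have "at (0::real) within {0<..1} = at_right 0"
    by (rule at_within_nhd[of _ "{..<1}"]) auto
  with l have l2: "(hh \<longlongrightarrow> l) (at_right 0)" by simp
  have sq: "filterlim (\<lambda>t::real. sqrt t) (at_right 0) (at_right 0)" by real_asymp
  have "((\<lambda>r. hh (sqrt r)) \<longlongrightarrow> l) (at_right 0)" using filterlim_compose[OF l2 sq] .
  moreover have "eventually (\<lambda>r. hh (sqrt r) = \<delta> r) (at_right 0)"
    unfolding eventually_at_right_field hh_def by (rule exI[of _ 1]) auto
  ultimately show ?thesis using Lim_transform_eventually by blast
qed

definition L0 where "L0 = Lim (at_right 0) \<delta>"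

lemma delta_L0: "(\<delta> \<longlongrightarrow> L0) (at_right 0)"
proof -
  obtain l where l: "(\<delta> \<longlongrightarrow> l) (at_right 0)" using delta_lim by auto
  have "L0 = l" unfolding L0_def by (rule tendsto_Lim[OF _ l]) simp
  with l show ?thesis by simp
qed

lemma dext_nonneg: "r \<ge> 0 \<Longrightarrow> dext \<delta> r \<ge> 0"
proof (cases "r > 0")
  case True thus ?thesis using nonneg by (simp add: dext_def)
next
  case False
  have "0 \<le> L0"
    by (rule tendsto_lowerbound[OF delta_L0])
      (use nonneg in \<open>auto simp: eventually_at_right_field intro!: exI[of _ 1]\<close>)
  thus ?thesis using False by (simp add: dext_def L0_def)
qed

lemma dext_le: "r \<ge> 0 \<Longrightarrow> dext \<delta> r \<le> K"
proof (cases "r > 0")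
  case True thus ?thesis using bndK by (auto simp: dext_def)
next
  case False
  have "L0 \<le> K"
    by (rule tendsto_upperbound[OF delta_L0])
      (use bndK in \<open>auto simp: eventually_at_right_field intro!: exI[of _ 1]\<close>)
  thus ?thesis using False by (simp add: dext_def L0_def)
qed

lemma K_nonneg: "K \<ge> 0" using dext_le[of 1] dext_nonneg[of 1] by simp

definition HH where "HH t = dext \<delta> (t\<^sup>2)"

lemma HH_lip: assumes "R > 0" shows "\<exists>M\<ge>0. \<forall>x y. \<bar>x\<bar> \<le> R \<longrightarrow> \<bar>y\<bar> \<le> R \<longrightarrow> \<bar>HH x - HH y\<bar> \<le> M * \<bar>x - y\<bar>"
proof -
  obtain M where M: "M \<ge> 0" "\<forall>a\<in>{0<..R}. \<forall>b\<in>{0<..R}. \<bar>hh a - hh b\<bar> \<le> M * \<bar>a - b\<bar>"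
    using hh_lip[OF assms] by auto
  have HHpos: "t \<noteq> 0 \<Longrightarrow> HH t = hh \<bar>t\<bar>" for t unfolding HH_def hh_def dext_def by auto
  have HH0: "HH 0 = L0" unfolding HH_def dext_def L0_def by simp
  have hhlim: "(hh \<longlongrightarrow> L0) (at_right 0)"
  proof -
    have sq: "filterlim (\<lambda>t::real. t\<^sup>2) (at_right 0) (at_right 0)" by real_asymp
    show ?thesis unfolding hh_def using filterlim_compose[OF delta_L0 sq] .
  qed
  have zero: "\<bar>L0 - hh b\<bar> \<le> M * b" if b: "b \<in> {0<..R}" for b
  proof -
    have "M * \<bar>0 - b\<bar> \<ge> \<bar>L0 - hh b\<bar>"
    proof (rule tendsto_le[OF trivial_limit_at_right_real])
      show "((\<lambda>a. \<bar>hh a - hh b\<bar>) \<longlongrightarrow> \<bar>L0 - hh b\<bar>) (at_right 0)"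
        by (intro tendsto_intros hhlim)
      show "((\<lambda>a. M * \<bar>a - b\<bar>) \<longlongrightarrow> M * \<bar>0 - b\<bar>) (at_right 0)"
        by (intro tendsto_intros)
      show "eventually (\<lambda>a. \<bar>hh a - hh b\<bar> \<le> M * \<bar>a - b\<bar>) (at_right 0)"
        unfolding eventually_at_right_field using b M by (intro exI[of _ R]) auto
    qed
    thus ?thesis using b by simp
  qed
  have habs: "\<bar>HH x - HH y\<bar> \<le> M * \<bar>\<bar>x\<bar> - \<bar>y\<bar>\<bar>" if "\<bar>x\<bar> \<le> R" "\<bar>y\<bar> \<le> R" for x y
  proof (cases "x = 0")
    case True
    show ?thesis
    proof (cases "y = 0")
      case True with \<open>x = 0\<close> show ?thesis by simp
    next
      case False
      thus ?thesis using zero[of "\<bar>y\<bar>"] that \<open>x = 0\<close> HH0 HHpos[of y] by auto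
    qed
  next
    case False
    show ?thesis
    proof (cases "y = 0")
      case True
      thus ?thesis using zero[of "\<bar>x\<bar>"] that \<open>x \<noteq> 0\<close> HH0 HHpos[of x]
        by (auto simp: abs_minus_commute)
    next
      case False
      thus ?thesis using M(2) that \<open>x \<noteq> 0\<close> HHpos[of x] HHpos[of y] by auto
    qed
  qed
  show ?thesis
  proof (intro exI[of _ M] conjI allI impI)
    fix x y :: real assume "\<bar>x\<bar> \<le> R" "\<bar>y\<bar> \<le> R"
    hence "\<bar>HH x - HH y\<bar> \<le> M * \<bar>\<bar>x\<bar> - \<bar>y\<bar>\<bar>" by (rule habs)
    also have "\<dots> \<le> M * \<bar>x - y\<bar>" using M(1) by (intro mult_left_mono) auto
    finally show "\<bar>HH x - HH y\<bar> \<le> M * \<bar>x - y\<bar>" .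
  qed (use M in auto)
qed

lemma HH_cont: "continuous_on UNIV HH"
proof -
  have "continuous (at x) HH" for x
  proof -
    define R where "R = \<bar>x\<bar> + 1"
    have "R > 0" unfolding R_def by simp
    from HH_lip[OF this] obtain M where M: "M \<ge> 0" "\<forall>x y. \<bar>x\<bar> \<le> R \<longrightarrow> \<bar>y\<bar> \<le> R \<longrightarrow> \<bar>HH x - HH y\<bar> \<le> M * \<bar>x - y\<bar>"
      by blast
    have "(M+1)-lipschitz_on {x-1<..<x+1} HH"
    proof (intro lipschitz_onI)
      fix a b assume "a \<in> {x-1<..<x+1}" "b \<in> {x-1<..<x+1}"
      hence "\<bar>HH a - HH b\<bar> \<le> M * \<bar>a - b\<bar>" using M(2) unfolding R_def by auto
      also have "\<dots> \<le> (M+1) * \<bar>a - b\<bar>" by (intro mult_right_mono) auto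
      finally show "dist (HH a) (HH b) \<le> (M+1) * dist a b" by (simp add: dist_real_def)
    qed (use M in auto)
    hence "continuous_on {x-1<..<x+1} HH" by (rule lipschitz_on_continuous_on)
    thus ?thesis by (rule continuous_on_interior) auto
  qed
  thus ?thesis by (simp add: continuous_at_imp_continuous_on)
qed

end

lemma at_oc_interior: "a < x \<Longrightarrow> x < b \<Longrightarrow> at x within {a<..b} = at (x::real)"
  by (rule at_within_nhd[of x "{a<..<b}"]) auto

lemma oc_continuous:
  assumes D: "\<forall>x\<in>{a<..b}. (f has_real_derivative f' x) (at x within {a<..b})"
  shows "continuous_on {a<..b} f"
  using D DERIV_continuous continuous_on_eq_continuous_within by blast

lemma mvt_oc:
  fixes f :: "real \<Rightarrow> real"
  assumes D: "\<forall>x\<in>{a<..b}. (f has_real_derivative f' x) (at x within {a<..b})"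
    and st: "a < s" "s < t" "t \<le> b"
  shows "\<exists>\<xi>. s < \<xi> \<and> \<xi> < t \<and> f t - f s = (t - s) * f' \<xi>"
proof -
  have c: "continuous_on {s..t} f"
    by (rule continuous_on_subset[OF oc_continuous[OF D]]) (use st in auto)
  have d: "(f has_real_derivative f' x) (at x)" if "s < x" "x < t" for x
  proof -
    have "x \<in> {a<..b}" using that st by auto
    hence "(f has_real_derivative f' x) (at x within {a<..b})" using D by blast
    thus ?thesis using at_oc_interior[of a x b] that st by simp
  qed
  obtain l z where z: "s < z" "z < t" "DERIV f z :> l" "f t - f s = (t - s) * l"
    using MVT[OF st(2) c] d real_differentiable_def by metis
  have "l = f' z" using DERIV_unique[OF z(3) d[OF z(1,2)]] .
  thus ?thesis using z by auto
qed

lemma lip_oc: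
  fixes f :: "real \<Rightarrow> real"
  assumes D: "\<forall>x\<in>{a<..b}. (f has_real_derivative f' x) (at x within {a<..b})"
    and C: "\<forall>x\<in>{a<..b}. \<bar>f' x\<bar> \<le> C"
    and s: "s \<in> {a<..b}" and t: "t \<in> {a<..b}"
  shows "\<bar>f t - f s\<bar> \<le> C * \<bar>t - s\<bar>"
proof -
  have *: "\<bar>f t - f s\<bar> \<le> C * \<bar>t - s\<bar>" if hyp: "s \<in> {a<..b}" "t \<in> {a<..b}" "s < t" for s t
  proof -
    obtain \<xi> where \<xi>: "s < \<xi>" "\<xi> < t" "f t - f s = (t - s) * f' \<xi>"
      using mvt_oc[OF D, of s t] hyp by force
    have "\<bar>f t - f s\<bar> = \<bar>t - s\<bar> * \<bar>f' \<xi>\<bar>" using \<xi> by (simp add: abs_mult)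
    also have "\<dots> \<le> \<bar>t - s\<bar> * C" using C \<xi> hyp by (intro mult_left_mono) auto
    finally show ?thesis by (simp add: mult.commute)
  qed
  consider "s < t" | "s = t" | "t < s" by linarith
  thus ?thesis
  proof cases
    case 1 thus ?thesis using *[OF s t] by simp
  next
    case 2 thus ?thesis by simp
  next
    case 3 thus ?thesis using *[OF t s] by (simp add: abs_minus_commute)
  qed
qed

lemma anti_oc:
  fixes f :: "real \<Rightarrow> real"
  assumes D: "\<forall>x\<in>{a<..b}. (f has_real_derivative f' x) (at x within {a<..b})"
    and C: "\<forall>x\<in>{a<..b}. f' x \<le> 0"
    and s: "s \<in> {a<..b}" and t: "t \<in> {a<..b}" and st: "s \<le> t"
  shows "f t \<le> f s"
proof (cases "s = t")
  case False
  then obtain \<xi> where \<xi>: "s < \<xi>" "\<xi> < t" "f t - f s = (t - s) * f' \<xi>"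
    using mvt_oc[OF D, of s t] s t st by auto
  have "(t - s) * f' \<xi> \<le> 0" using C \<xi> s t by (intro mult_nonneg_nonpos) auto
  thus ?thesis using \<xi> by simp
qed simp

lemma mono_oc:
  fixes f :: "real \<Rightarrow> real"
  assumes D: "\<forall>x\<in>{a<..b}. (f has_real_derivative f' x) (at x within {a<..b})"
    and C: "\<forall>x\<in>{a<..b}. f' x \<ge> 0"
    and s: "s \<in> {a<..b}" and t: "t \<in> {a<..b}" and st: "s \<le> t"
  shows "f s \<le> f t"
proof -
  have D': "\<forall>x\<in>{a<..b}. ((\<lambda>x. - f x) has_real_derivative - f' x) (at x within {a<..b})"
    using D by (auto intro: derivative_intros)
  show ?thesis using anti_oc[OF D' _ s t st] C by auto
qed

lemma gronwall_oc:
  fixes g :: "real \<Rightarrow> real"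
  assumes D: "\<forall>x\<in>{a<..b}. (g has_real_derivative g' x) (at x within {a<..b})"
    and pos: "\<forall>x\<in>{a<..b}. g x > 0"
    and C: "\<forall>x\<in>{a<..b}. \<bar>g' x\<bar> \<le> C * g x" and C0: "C \<ge> 0"
    and x: "x \<in> {a<..b}"
  shows "g x \<le> g b * exp (C * (b - a))"
proof -
  have b: "b \<in> {a<..b}" using x by auto
  have D': "\<forall>x\<in>{a<..b}. ((\<lambda>x. ln (g x)) has_real_derivative (inverse (g x) * g' x)) (at x within {a<..b})"
    using D pos by (auto intro!: DERIV_chain2[OF DERIV_ln])
  have C': "\<forall>x\<in>{a<..b}. \<bar>inverse (g x) * g' x\<bar> \<le> C"
  proof
    fix y assume y: "y \<in> {a<..b}"
    have gy: "g y > 0" using pos y by auto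
    hence "\<bar>inverse (g y) * g' y\<bar> = \<bar>g' y\<bar> / g y" by (simp add: abs_mult field_simps)
    also have "\<dots> \<le> C" using C y pos by (simp add: divide_le_eq)
    finally show "\<bar>inverse (g y) * g' y\<bar> \<le> C" .
  qed
  have "\<bar>ln (g b) - ln (g x)\<bar> \<le> C * \<bar>b - x\<bar>" by (rule lip_oc[OF D' C' x b])
  also have "\<dots> \<le> C * (b - a)" using x C0 by (intro mult_left_mono) auto
  finally have "ln (g x) \<le> ln (g b) + C * (b - a)" by linarith
  hence "exp (ln (g x)) \<le> exp (ln (g b) + C * (b - a))" by simp
  thus ?thesis using pos x b by (simp add: exp_add)
qed

lemma lim_oc:
  fixes f :: "real \<Rightarrow> real"
  assumes D: "\<forall>x\<in>{a<..b}. (f has_real_derivative f' x) (at x within {a<..b})"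
    and C: "\<forall>x\<in>{a<..b}. \<bar>f' x\<bar> \<le> C" and ab: "a < b"
  shows "\<exists>l. (f \<longlongrightarrow> l) (at a within {a<..b})"
proof -
  have "(max C 0)-lipschitz_on {a<..b} f"
  proof (intro lipschitz_onI)
    fix s t assume "s \<in> {a<..b}" "t \<in> {a<..b}"
    hence "\<bar>f s - f t\<bar> \<le> C * \<bar>s - t\<bar>" using lip_oc[OF D C] by blast
    also have "\<dots> \<le> max C 0 * \<bar>s - t\<bar>" by (intro mult_right_mono) auto
    finally show "dist (f s) (f t) \<le> max C 0 * dist s t" by (simp add: dist_real_def)
  qed auto
  hence "uniformly_continuous_on {a<..b} f" by (rule lipschitz_on_uniformly_continuous)
  moreover have "a \<in> closure {a<..b}" using ab by (simp add: closure_greaterThanAtMost)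
  ultimately obtain l where "(f \<longlongrightarrow> l) (at a within {a<..b})"
    by (rule uniformly_continuous_on_extension_at_closure)
  thus ?thesis by blast
qed


lemma at_oc_right: "a < b \<Longrightarrow> at a within {a<..b} = at_right (a::real)"
  by (rule at_within_nhd[of a "{..<b}"]) auto

lemma endpoint_oc:
  fixes f :: "real \<Rightarrow> real"
  assumes D: "\<forall>x\<in>{a<..b}. (f has_real_derivative f' x) (at x within {a<..b})"
    and ab: "a < b"
    and fl: "(f \<longlongrightarrow> fa) (at a within {a<..b})"
    and dl: "(f' \<longlongrightarrow> la) (at a within {a<..b})"
  shows "((\<lambda>x. if x = a then fa else f x) has_real_derivative la) (at a within {a..b})"
proof -
  have fl': "(f \<longlongrightarrow> fa) (at_right a)" using fl at_oc_right[OF ab] by simp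
  have dl': "(f' \<longlongrightarrow> la) (at_right a)" using dl at_oc_right[OF ab] by simp
  have eq: "at a within {a..b} = at_right a"
  proof -
    have "at a within {a..b} = at a within {a<..b}" by (rule at_within_nhd[of a UNIV]) auto
    thus ?thesis using at_oc_right[OF ab] by simp
  qed
  show ?thesis unfolding has_field_derivative_iff eq
  proof (rule tendstoI)
    fix e :: real assume e: "e > 0"
    have "eventually (\<lambda>x. dist (f' x) la < e/2) (at_right a)" using dl' e by (intro tendstoD) auto
    then obtain d where d: "d > a" "\<And>x. a < x \<Longrightarrow> x < d \<Longrightarrow> \<bar>f' x - la\<bar> < e/2"
      unfolding eventually_at_right_field dist_real_def by auto
    have key: "\<bar>f y - fa - la * (y - a)\<bar> \<le> e/2 * (y - a)" if y: "a < y" "y < d" "y \<le> b" for y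
    proof -
      have step: "\<bar>f y - f x - la * (y - x)\<bar> \<le> e/2 * (y - x)" if x: "a < x" "x < y" for x
      proof -
        obtain \<xi> where \<xi>: "x < \<xi>" "\<xi> < y" "f y - f x = (y - x) * f' \<xi>"
          using mvt_oc[OF D, of x y] x y by force
        have "f y - f x - la * (y - x) = (y - x) * (f' \<xi> - la)"
          using \<xi> by (simp add: algebra_simps)
        hence "\<bar>f y - f x - la * (y - x)\<bar> = (y - x) * \<bar>f' \<xi> - la\<bar>"
          using x by (simp add: abs_mult)
        also have "\<dots> \<le> (y - x) * (e/2)" using d(2)[of \<xi>] \<xi> x y by (intro mult_left_mono) auto
        finally show ?thesis by (simp add: mult.commute)
      qed
      show ?thesis
      proof (rule tendsto_le[OF trivial_limit_at_right_real])
        show "((\<lambda>x. e/2 * (y - x)) \<longlongrightarrow> e/2 * (y - a)) (at_right a)" by (intro tendsto_intros)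
        show "((\<lambda>x. \<bar>f y - f x - la * (y - x)\<bar>) \<longlongrightarrow> \<bar>f y - fa - la * (y - a)\<bar>) (at_right a)"
          by (intro tendsto_intros fl')
        show "eventually (\<lambda>x. \<bar>f y - f x - la * (y - x)\<bar> \<le> e/2 * (y - x)) (at_right a)"
          unfolding eventually_at_right_field using y step by (intro exI[of _ y]) auto
      qed
    qed
    show "eventually (\<lambda>y. dist (((if y = a then fa else f y) - (if a = a then fa else f a)) / (y - a)) la < e) (at_right a)"
      unfolding eventually_at_right_field
    proof (intro exI[of _ "min d b"] conjI allI impI)
      show "a < min d b" using d ab by auto
      fix y assume y: "a < y" "y < min d b"
      have "\<bar>(f y - fa) / (y - a) - la\<bar> = \<bar>f y - fa - la * (y - a)\<bar> / (y - a)"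
        using y by (simp add: field_simps)
      also have "\<dots> \<le> e/2" using key[of y] y by (simp add: divide_le_eq)
      also have "\<dots> < e" using e by simp
      finally show "dist (((if y = a then fa else f y) - (if a = a then fa else f a)) / (y - a)) la < e"
        using y by (simp add: dist_real_def)
    qed
  qed
qed

lemma glue:
  fixes p q p' q' :: "real \<Rightarrow> real"
  assumes aA: "a' < A" and A0: "A < 0"
    and L: "\<forall>t\<in>{a'..A}. (p has_real_derivative p' t) (at t within {a'..A})"
    and R: "\<forall>t\<in>{A<..0}. (q has_real_derivative q' t) (at t within {A<..0})"
    and ep: "((\<lambda>t. if t = A then p A else q t) has_real_derivative p' A) (at A within {A..0})"
    and t: "t \<in> {a'<..0}"
  shows "((\<lambda>t. if t \<le> A then p t else q t) has_real_derivative (if t \<le> A then p' t else q' t)) (at t within {a'<..0})"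
proof -
  consider "t < A" | "t = A" | "t > A" by linarith
  thus ?thesis
  proof cases
    case 1
    have "at t within {a'..A} = at t" by (rule at_within_nhd[of t "{a'<..<A}"]) (use 1 t in auto)
    moreover have "(p has_real_derivative p' t) (at t within {a'..A})" using L 1 t by auto
    ultimately have "(p has_real_derivative p' t) (at t)" by simp
    hence "((\<lambda>t. if t \<le> A then p t else q t) has_real_derivative p' t) (at t)"
      by (rule has_field_derivative_transform_within_open[of _ _ _ "{..<A}"]) (use 1 in auto)
    thus ?thesis using 1 by (simp add: has_field_derivative_at_within)
  next
    case 3
    have e: "at t within {a'<..0} = at t within {A<..0}" by (rule at_within_nhd[of t "{A<..}"]) (use 3 aA in auto)
    have "(q has_real_derivative q' t) (at t within {A<..0})" using R 3 t by auto
    hence "((\<lambda>t. if t \<le> A then p t else q t) has_real_derivative q' t) (at t within {A<..0})"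
      by (rule has_field_derivative_transform_within[of _ _ _ _ 1]) (use 3 t in auto)
    thus ?thesis using 3 e by simp
  next
    case 2
    let ?g = "\<lambda>t. if t \<le> A then p t else q t"
    have un: "{a'<..0} = {a'<..A} \<union> {A..0}" using aA A0 by (auto simp: set_eq_iff)
    have l1: "((\<lambda>y. (?g y - ?g A) / (y - A)) \<longlongrightarrow> p' A) (at A within {a'<..A})"
    proof -
      have "(p has_real_derivative p' A) (at A within {a'<..A})"
        by (rule DERIV_subset[of _ _ _ "{a'..A}"]) (use L aA in auto)
      hence "((\<lambda>y. (p y - p A) / (y - A)) \<longlongrightarrow> p' A) (at A within {a'<..A})"
        by (simp add: has_field_derivative_iff)
      moreover have "eventually (\<lambda>y. (p y - p A) / (y - A) = (?g y - ?g A) / (y - A)) (at A within {a'<..A})"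
        by (auto simp: eventually_at_filter)
      ultimately show ?thesis by (rule Lim_transform_eventually)
    qed
    have l2: "((\<lambda>y. (?g y - ?g A) / (y - A)) \<longlongrightarrow> p' A) (at A within {A..0})"
    proof -
      have "((\<lambda>y. ((if y = A then p A else q y) - (if A = A then p A else q A)) / (y - A)) \<longlongrightarrow> p' A) (at A within {A..0})"
        using ep by (simp only: has_field_derivative_iff)
      moreover have "eventually (\<lambda>y. ((if y = A then p A else q y) - (if A = A then p A else q A)) / (y - A) = (?g y - ?g A) / (y - A)) (at A within {A..0})"
        by (auto simp: eventually_at_filter)
      ultimately show ?thesis by (rule Lim_transform_eventually)
    qed
    have "((\<lambda>y. (?g y - ?g A) / (y - A)) \<longlongrightarrow> p' A) (at A within {a'<..0})"
      unfolding un Lim_within_Un using l1 l2 by auto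
    thus ?thesis using 2 by (simp add: has_field_derivative_iff)
  qed
qed

lemma vd_fst: "(y has_vector_derivative Y) F \<Longrightarrow> ((\<lambda>t. fst (y t)) has_real_derivative fst Y) F"
  unfolding has_real_derivative_iff_has_vector_derivative
  by (rule bounded_linear.has_vector_derivative[OF bounded_linear_fst])

lemma vd_snd: "(y has_vector_derivative Y) F \<Longrightarrow> ((\<lambda>t. snd (y t)) has_vector_derivative snd Y) F"
  by (rule bounded_linear.has_vector_derivative[OF bounded_linear_snd])

lemma vd_snd_real: "(y has_vector_derivative (Y::'a::real_normed_vector \<times> real)) F \<Longrightarrow> ((\<lambda>t. snd (y t)) has_real_derivative snd Y) F"
  unfolding has_real_derivative_iff_has_vector_derivative
  by (rule bounded_linear.has_vector_derivative[OF bounded_linear_snd])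

type_synonym r3 = "real \<times> real \<times> real"

definition LB :: "r3 set \<Rightarrow> (r3 \<Rightarrow> real) \<Rightarrow> bool" where
  "LB S f \<longleftrightarrow> (\<exists>L B. \<forall>p\<in>S. \<forall>q\<in>S. \<bar>f p - f q\<bar> \<le> L * norm (p - q) \<and> \<bar>f p\<bar> \<le> B)"

lemma comp_le:
  fixes z :: r3
  shows "\<bar>fst z\<bar> \<le> norm z" "\<bar>fst (snd z)\<bar> \<le> norm z" "\<bar>snd (snd z)\<bar> \<le> norm z"
proof -
  obtain a b c where z: "z = (a, b, c)" by (cases z) auto
  have "norm a \<le> norm (a, b, c)" by (rule norm_fst_le)
  thus "\<bar>fst z\<bar> \<le> norm z" using z by simp
  have "norm b \<le> norm (b, c)" by (rule norm_fst_le)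
  also have "norm (b, c) \<le> norm (a, b, c)" by (rule norm_snd_le)
  finally show "\<bar>fst (snd z)\<bar> \<le> norm z" using z by simp
  have "norm c \<le> norm (b, c)" by (rule norm_snd_le)
  also have "norm (b, c) \<le> norm (a, b, c)" by (rule norm_snd_le)
  finally show "\<bar>snd (snd z)\<bar> \<le> norm z" using z by simp
qed

lemma norm_le_sum:
  fixes z :: r3
  shows "norm z \<le> \<bar>fst z\<bar> + \<bar>fst (snd z)\<bar> + \<bar>snd (snd z)\<bar>"
proof -
  obtain a b c where z: "z = (a, b, c)" by (cases z) auto
  have "norm (a, b, c) \<le> norm a + norm (b, c)" by (rule norm_Pair_le)
  also have "norm (b, c) \<le> norm b + norm c" by (rule norm_Pair_le)
  finally show ?thesis using z by simp
qed

lemma LB_add: "LB S f \<Longrightarrow> LB S g \<Longrightarrow> LB S (\<lambda>p. f p + g p)"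
proof -
  assume "LB S f" "LB S g"
  then obtain Lf Bf Lg Bg where f: "\<forall>p\<in>S. \<forall>q\<in>S. \<bar>f p - f q\<bar> \<le> Lf * norm (p - q) \<and> \<bar>f p\<bar> \<le> Bf"
    and g: "\<forall>p\<in>S. \<forall>q\<in>S. \<bar>g p - g q\<bar> \<le> Lg * norm (p - q) \<and> \<bar>g p\<bar> \<le> Bg"
    unfolding LB_def by blast
  show ?thesis unfolding LB_def
  proof (intro exI ballI conjI)
    fix p q assume pq: "p \<in> S" "q \<in> S"
    have "\<bar>f p + g p - (f q + g q)\<bar> \<le> \<bar>f p - f q\<bar> + \<bar>g p - g q\<bar>" by simp
    also have "\<dots> \<le> Lf * norm (p - q) + Lg * norm (p - q)" using f g pq by (intro add_mono) auto
    finally show "\<bar>f p + g p - (f q + g q)\<bar> \<le> (Lf + Lg) * norm (p - q)" by (simp add: algebra_simps)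
    have "\<bar>f p + g p\<bar> \<le> \<bar>f p\<bar> + \<bar>g p\<bar>" by simp
    also have "\<dots> \<le> Bf + Bg" using f g pq by (intro add_mono) auto
    finally show "\<bar>f p + g p\<bar> \<le> Bf + Bg" .
  qed
qed

lemma LB_mult: "LB S f \<Longrightarrow> LB S g \<Longrightarrow> LB S (\<lambda>p. f p * g p)"
proof -
  assume "LB S f" "LB S g"
  then obtain Lf Bf Lg Bg where f: "\<forall>p\<in>S. \<forall>q\<in>S. \<bar>f p - f q\<bar> \<le> Lf * norm (p - q) \<and> \<bar>f p\<bar> \<le> Bf"
    and g: "\<forall>p\<in>S. \<forall>q\<in>S. \<bar>g p - g q\<bar> \<le> Lg * norm (p - q) \<and> \<bar>g p\<bar> \<le> Bg"
    unfolding LB_def by blast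
  show ?thesis unfolding LB_def
  proof (intro exI ballI conjI)
    fix p q assume pq: "p \<in> S" "q \<in> S"
    have "f p * g p - f q * g q = f p * (g p - g q) + (f p - f q) * g q" by (simp add: algebra_simps)
    hence "\<bar>f p * g p - f q * g q\<bar> \<le> \<bar>f p\<bar> * \<bar>g p - g q\<bar> + \<bar>f p - f q\<bar> * \<bar>g q\<bar>"
      by (simp add: abs_mult[symmetric] abs_triangle_ineq)
    have a1: "\<bar>f p\<bar> \<le> Bf" and a2: "\<bar>g p - g q\<bar> \<le> Lg * norm (p - q)"
      and a3: "\<bar>f p - f q\<bar> \<le> Lf * norm (p - q)" and a4: "\<bar>g q\<bar> \<le> Bg" and a5: "\<bar>g p\<bar> \<le> Bg"
      using f g pq by auto
    have b1: "0 \<le> Bf" using a1 abs_ge_zero[of "f p"] by linarith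
    have b2: "0 \<le> Lf * norm (p - q)" using a3 abs_ge_zero[of "f p - f q"] by linarith
    note \<open>\<bar>f p * g p - f q * g q\<bar> \<le> _\<close>
    also have "\<bar>f p\<bar> * \<bar>g p - g q\<bar> + \<bar>f p - f q\<bar> * \<bar>g q\<bar> \<le> Bf * (Lg * norm (p - q)) + (Lf * norm (p - q)) * Bg"
      using a1 a2 a3 a4 b1 b2 by (intro add_mono mult_mono) auto
    finally show "\<bar>f p * g p - f q * g q\<bar> \<le> (Bf * Lg + Lf * Bg) * norm (p - q)" by (simp add: algebra_simps)
    have "\<bar>f p * g p\<bar> = \<bar>f p\<bar> * \<bar>g p\<bar>" by (simp add: abs_mult)
    also have "\<dots> \<le> Bf * Bg" using a1 a5 b1 by (intro mult_mono) auto
    finally show "\<bar>f p * g p\<bar> \<le> Bf * Bg" .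
  qed
qed

lemma LB_const: "LB S (\<lambda>p. c)"
  unfolding LB_def by (rule exI[of _ 0], rule exI[of _ "\<bar>c\<bar>"]) auto

lemma LB_minus: "LB S f \<Longrightarrow> LB S g \<Longrightarrow> LB S (\<lambda>p. f p - g p)"
proof -
  assume "LB S f" "LB S g"
  hence "LB S (\<lambda>p. f p + (-1) * g p)" by (intro LB_add LB_mult LB_const)
  thus ?thesis by simp
qed

lemma LB_comp:
  assumes N: "\<forall>p\<in>S. norm p \<le> N" and c: "\<And>z::r3. \<bar>c z\<bar> \<le> norm z" and lin: "\<And>p q. c p - c q = c (p - q)"
  shows "LB S c"
  unfolding LB_def
proof (rule exI[of _ 1], rule exI[of _ N], intro ballI conjI)
  fix p q assume "p \<in> S" "q \<in> S"
  show "\<bar>c p - c q\<bar> \<le> 1 * norm (p - q)" using c[of "p - q"] lin[of p q] by simp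
  show "\<bar>c p\<bar> \<le> N" using c[of p] N \<open>p \<in> S\<close> by force
qed

lemma LB_fst: "\<forall>p\<in>S. norm p \<le> N \<Longrightarrow> LB S (\<lambda>p. fst p)"
  by (rule LB_comp) (auto simp: comp_le)
lemma LB_fst2: "\<forall>p\<in>S. norm p \<le> N \<Longrightarrow> LB S (\<lambda>p. fst (snd p))"
  by (rule LB_comp) (auto simp: comp_le)
lemma LB_snd2: "\<forall>p\<in>S. norm p \<le> N \<Longrightarrow> LB S (\<lambda>p. snd (snd p))"
  by (rule LB_comp) (auto simp: comp_le)

context delta_ok begin

lemma LB_HH: assumes N: "\<forall>p\<in>S. norm p \<le> N" shows "LB S (\<lambda>p. HH (fst p))"
proof -
  have "\<exists>M\<ge>0. \<forall>x y. \<bar>x\<bar> \<le> \<bar>N\<bar> + 1 \<longrightarrow> \<bar>y\<bar> \<le> \<bar>N\<bar> + 1 \<longrightarrow> \<bar>HH x - HH y\<bar> \<le> M * \<bar>x - y\<bar>"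
    by (rule HH_lip) simp
  then obtain M where M: "M \<ge> 0" "\<forall>x y. \<bar>x\<bar> \<le> \<bar>N\<bar> + 1 \<longrightarrow> \<bar>y\<bar> \<le> \<bar>N\<bar> + 1 \<longrightarrow> \<bar>HH x - HH y\<bar> \<le> M * \<bar>x - y\<bar>"
    by blast
  show ?thesis unfolding LB_def
  proof (rule exI[of _ M], rule exI[of _ K], intro ballI conjI)
    fix p q assume pq: "p \<in> S" "q \<in> S"
    have "\<bar>fst p\<bar> \<le> \<bar>N\<bar> + 1" "\<bar>fst q\<bar> \<le> \<bar>N\<bar> + 1" using comp_le(1)[of p] comp_le(1)[of q] N pq by force+
    hence "\<bar>HH (fst p) - HH (fst q)\<bar> \<le> M * \<bar>fst p - fst q\<bar>" using M by blast
    also have "\<dots> \<le> M * norm (p - q)" using comp_le(1)[of "p - q"] M(1) by (intro mult_left_mono) auto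
    finally show "\<bar>HH (fst p) - HH (fst q)\<bar> \<le> M * norm (p - q)" .
    show "\<bar>HH (fst p)\<bar> \<le> K" using dext_nonneg dext_le unfolding HH_def by (simp add: abs_le_iff)
  qed
qed

definition F2 :: "r3 \<Rightarrow> real" where
  "F2 p = snd (snd p) * fst p * (1/2) - HH (fst p) * (fst p * fst p) * fst (snd p)"
definition F3 :: "r3 \<Rightarrow> real" where
  "F3 p = (-4) * HH (fst p) * (fst (snd p) * fst (snd p))"
definition FF :: "r3 \<Rightarrow> r3" where
  "FF p = (fst (snd p), F2 p, F3 p)"

lemma FF_lip: assumes N: "\<forall>p\<in>S. norm p \<le> N"
  shows "\<exists>L M. \<forall>p\<in>S. \<forall>q\<in>S. norm (FF p - FF q) \<le> L * norm (p - q) \<and> norm (FF p) \<le> M"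
proof -
  note b = LB_fst[OF N] LB_fst2[OF N] LB_snd2[OF N] LB_HH[OF N] LB_const
  have "LB S (\<lambda>p. fst (snd p))" by (rule b)
  moreover have "LB S F2" unfolding F2_def by (intro LB_minus LB_mult b)
  moreover have "LB S F3" unfolding F3_def by (intro LB_minus LB_mult b)
  ultimately obtain L1 B1 L2 B2 L3 B3 where
    l1: "\<forall>p\<in>S. \<forall>q\<in>S. \<bar>fst (snd p) - fst (snd q)\<bar> \<le> L1 * norm (p - q) \<and> \<bar>fst (snd p)\<bar> \<le> B1" and
    l2: "\<forall>p\<in>S. \<forall>q\<in>S. \<bar>F2 p - F2 q\<bar> \<le> L2 * norm (p - q) \<and> \<bar>F2 p\<bar> \<le> B2" and
    l3: "\<forall>p\<in>S. \<forall>q\<in>S. \<bar>F3 p - F3 q\<bar> \<le> L3 * norm (p - q) \<and> \<bar>F3 p\<bar> \<le> B3"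
    unfolding LB_def by metis
  show ?thesis
  proof (rule exI[of _ "L1 + L2 + L3"], rule exI[of _ "B1 + B2 + B3"], intro ballI conjI)
    fix p q assume pq: "p \<in> S" "q \<in> S"
    have "norm (FF p - FF q) \<le> \<bar>fst (snd p) - fst (snd q)\<bar> + \<bar>F2 p - F2 q\<bar> + \<bar>F3 p - F3 q\<bar>"
      using norm_le_sum[of "FF p - FF q"] by (simp add: FF_def)
    also have "\<dots> \<le> L1 * norm (p - q) + L2 * norm (p - q) + L3 * norm (p - q)"
      using l1 l2 l3 pq by (intro add_mono) auto
    finally show "norm (FF p - FF q) \<le> (L1 + L2 + L3) * norm (p - q)" by (simp add: algebra_simps)
    have "norm (FF p) \<le> \<bar>fst (snd p)\<bar> + \<bar>F2 p\<bar> + \<bar>F3 p\<bar>"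
      using norm_le_sum[of "FF p"] by (simp add: FF_def)
    also have "\<dots> \<le> B1 + B2 + B3" using l1 l2 l3 pq by (intro add_mono) auto
    finally show "norm (FF p) \<le> B1 + B2 + B3" .
  qed
qed

lemma HH_isCont: "isCont HH x"
  using HH_cont continuous_on_eq_continuous_at[of UNIV HH] by auto

lemma F2_cont: "isCont F2 p"
  unfolding F2_def by (intro continuous_intros isCont_o2[OF _ HH_isCont])
lemma F3_cont: "isCont F3 p"
  unfolding F3_def by (intro continuous_intros isCont_o2[OF _ HH_isCont])

end

context delta_ok begin

lemma sol_unfold:
  assumes sol: "is_sol \<delta> A u v E"
  shows "\<forall>s\<in>{A<..0}. (u has_real_derivative v s) (at s within {A<..0})"
    "\<forall>s\<in>{A<..0}. (v has_real_derivative F2 (u s, v s, E s)) (at s within {A<..0})"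
    "\<forall>s\<in>{A<..0}. (E has_real_derivative F3 (u s, v s, E s)) (at s within {A<..0})"
  using sol unfolding is_sol_def F2_def F3_def HH_def by (auto simp: power2_eq_square)

lemma ext_contra:
  assumes A0: "A < 0" and sol: "is_sol \<delta> A u v E" and maxl: "maximal_left \<delta> A u v E"
    and bnd: "\<forall>s\<in>{A<..0}. \<bar>u s\<bar> \<le> B \<and> \<bar>v s\<bar> \<le> B \<and> \<bar>E s\<bar> \<le> B"
  shows False
proof -
  define I where "I = {A<..0}"
  note Du = sol_unfold(1)[OF sol, folded I_def]
  note Dv = sol_unfold(2)[OF sol, folded I_def]
  note DE = sol_unfold(3)[OF sol, folded I_def]
  define Y where "Y s = (u s, v s, E s)" for s
  have normY: "norm (Y s) \<le> 3 * B" if "s \<in> I" for s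
  proof -
    have "\<bar>u s\<bar> \<le> B \<and> \<bar>v s\<bar> \<le> B \<and> \<bar>E s\<bar> \<le> B" using bnd that unfolding I_def by auto
    thus ?thesis using norm_le_sum[of "Y s"] unfolding Y_def by simp
  qed
  obtain L0 M0 where LM0: "\<forall>p\<in>cball 0 (3*B). \<forall>q\<in>cball 0 (3*B). norm (FF p - FF q) \<le> L0 * norm (p - q) \<and> norm (FF p) \<le> M0"
    using FF_lip[of "cball 0 (3*B)" "3*B"] by auto
  have FFb: "norm (FF (Y s)) \<le> M0" if "s \<in> I" for s
    using LM0 normY[OF that] by auto
  have bv: "\<forall>s\<in>I. \<bar>v s\<bar> \<le> B" using bnd unfolding I_def by auto
  have bF2: "\<forall>s\<in>I. \<bar>F2 (u s, v s, E s)\<bar> \<le> M0"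
  proof
    fix s assume s: "s \<in> I"
    have "\<bar>F2 (u s, v s, E s)\<bar> \<le> norm (FF (Y s))" using comp_le(2)[of "FF (Y s)"] by (simp add: Y_def FF_def)
    thus "\<bar>F2 (u s, v s, E s)\<bar> \<le> M0" using FFb[OF s] by linarith
  qed
  have bF3: "\<forall>s\<in>I. \<bar>F3 (u s, v s, E s)\<bar> \<le> M0"
  proof
    fix s assume s: "s \<in> I"
    have "\<bar>F3 (u s, v s, E s)\<bar> \<le> norm (FF (Y s))" using comp_le(3)[of "FF (Y s)"] by (simp add: Y_def FF_def)
    thus "\<bar>F3 (u s, v s, E s)\<bar> \<le> M0" using FFb[OF s] by linarith
  qed
  obtain uA where uA: "(u \<longlongrightarrow> uA) (at A within I)" using lim_oc[OF Du[unfolded I_def] bv[unfolded I_def] A0] I_def by auto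
  obtain vA where vA: "(v \<longlongrightarrow> vA) (at A within I)" using lim_oc[OF Dv[unfolded I_def] bF2[unfolded I_def] A0] I_def by auto
  obtain EA where EA: "(E \<longlongrightarrow> EA) (at A within I)" using lim_oc[OF DE[unfolded I_def] bF3[unfolded I_def] A0] I_def by auto
  define y0 where "y0 = (uA, vA, EA)"
  have lF2: "((\<lambda>s. F2 (u s, v s, E s)) \<longlongrightarrow> F2 y0) (at A within I)"
    unfolding y0_def by (rule isCont_tendsto_compose[OF F2_cont]) (intro tendsto_intros uA vA EA)
  have lF3: "((\<lambda>s. F3 (u s, v s, E s)) \<longlongrightarrow> F3 y0) (at A within I)"
    unfolding y0_def by (rule isCont_tendsto_compose[OF F3_cont]) (intro tendsto_intros uA vA EA)
  have Nb: "\<forall>p\<in>cball y0 1. norm p \<le> norm y0 + 1"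
  proof
    fix p assume "p \<in> cball y0 1"
    hence "norm (p - y0) \<le> 1" by (simp add: dist_norm norm_minus_commute)
    thus "norm p \<le> norm y0 + 1" using norm_triangle_ineq2[of p y0] by linarith
  qed
  obtain L1 M1 where LM1: "\<forall>p\<in>cball y0 1. \<forall>q\<in>cball y0 1. norm (FF p - FF q) \<le> L1 * norm (p - q) \<and> norm (FF p) \<le> M1"
    using FF_lip[OF Nb] by auto
  define G where "G p = - FF p" for p
  have "\<exists>h>0. \<exists>z. z 0 = y0 \<and> (\<forall>t\<in>{0..h}. (z has_vector_derivative G (z t)) (at t within {0..h}))"
  proof (rule picard_local[of 1])
    fix x y assume "x \<in> cball y0 1" "y \<in> cball y0 1"
    thus "norm (G x - G y) \<le> L1 * norm (x - y)"
      using LM1 unfolding G_def by (metis minus_diff_eq minus_diff_minus norm_minus_cancel)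
  next
    fix x assume "x \<in> cball y0 1"
    thus "norm (G x) \<le> M1" using LM1 unfolding G_def by auto
  qed simp
  then obtain h z where h: "h > 0" and z0: "z 0 = y0"
    and zd: "\<forall>t\<in>{0..h}. (z has_vector_derivative G (z t)) (at t within {0..h})" by auto
  define y where "y t = z (A - t)" for t
  have yd: "(y has_vector_derivative FF (y t)) (at t within {A-h..A})" if t: "t \<in> {A-h..A}" for t
  proof -
    have d1: "((\<lambda>t. A - t) has_vector_derivative -1) (at t within {A-h..A})"
      unfolding has_real_derivative_iff_has_vector_derivative[symmetric]
      by (auto intro!: derivative_eq_intros)
    have "(z has_vector_derivative G (z (A - t))) (at (A - t) within {0..h})" using zd t by auto
    hence d2: "(z has_vector_derivative G (z (A - t))) (at (A - t) within (\<lambda>t. A - t) ` {A-h..A})"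
      by (rule has_vector_derivative_within_subset) auto
    have "((z \<circ> (\<lambda>t. A - t)) has_vector_derivative (-1) *\<^sub>R G (z (A - t))) (at t within {A-h..A})"
      by (rule vector_diff_chain_within[OF d1 d2])
    thus ?thesis unfolding y_def G_def by (simp add: o_def)
  qed
  define U where "U t = fst (y t)" for t
  define V where "V t = fst (snd (y t))" for t
  define W where "W t = snd (snd (y t))" for t
  have yUVW: "y t = (U t, V t, W t)" for t unfolding U_def V_def W_def by simp
  have yA: "y A = y0" unfolding y_def using z0 by simp
  have UA: "U A = uA" and VA: "V A = vA" and WA: "W A = EA" using yA unfolding U_def V_def W_def y0_def by auto
  have dU: "\<forall>t\<in>{A-h..A}. (U has_real_derivative V t) (at t within {A-h..A})"
    using vd_fst[OF yd] unfolding U_def V_def FF_def by auto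
  have dV: "\<forall>t\<in>{A-h..A}. (V has_real_derivative F2 (U t, V t, W t)) (at t within {A-h..A})"
    using vd_fst[OF vd_snd[OF yd]] yUVW unfolding V_def FF_def by auto
  have dW: "\<forall>t\<in>{A-h..A}. (W has_real_derivative F3 (U t, V t, W t)) (at t within {A-h..A})"
    using vd_snd_real[OF vd_snd[OF yd]] yUVW unfolding W_def FF_def by auto
  have aA: "A - h < A" using h by simp
  have epu: "((\<lambda>t. if t = A then U A else u t) has_real_derivative V A) (at A within {A..0})"
    unfolding UA VA by (rule endpoint_oc[OF Du[unfolded I_def] A0 uA[unfolded I_def] vA[unfolded I_def]])
  have epv: "((\<lambda>t. if t = A then V A else v t) has_real_derivative F2 (U A, V A, W A)) (at A within {A..0})"
    unfolding UA VA WA by (rule endpoint_oc[OF Dv[unfolded I_def] A0 vA[unfolded I_def] lF2[unfolded I_def y0_def]])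
  have epE: "((\<lambda>t. if t = A then W A else E t) has_real_derivative F3 (U A, V A, W A)) (at A within {A..0})"
    unfolding UA VA WA by (rule endpoint_oc[OF DE[unfolded I_def] A0 EA[unfolded I_def] lF3[unfolded I_def y0_def]])
  define u2 where "u2 t = (if t \<le> A then U t else u t)" for t
  define v2 where "v2 t = (if t \<le> A then V t else v t)" for t
  define E2 where "E2 t = (if t \<le> A then W t else E t)" for t
  have g1: "(u2 has_real_derivative v2 t) (at t within {A-h<..0})" if t: "t \<in> {A-h<..0}" for t
    using glue[OF aA A0 dU Du[unfolded I_def] epu t] unfolding u2_def v2_def by (simp add: if_distrib)
  have g2: "(v2 has_real_derivative F2 (u2 t, v2 t, E2 t)) (at t within {A-h<..0})" if t: "t \<in> {A-h<..0}" for t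
  proof -
    have "(v2 has_real_derivative (if t \<le> A then F2 (U t, V t, W t) else F2 (u t, v t, E t))) (at t within {A-h<..0})"
      using glue[OF aA A0 dV Dv[unfolded I_def] epv t] unfolding v2_def .
    thus ?thesis unfolding u2_def v2_def E2_def by (cases "t \<le> A") auto
  qed
  have g3: "(E2 has_real_derivative F3 (u2 t, v2 t, E2 t)) (at t within {A-h<..0})" if t: "t \<in> {A-h<..0}" for t
  proof -
    have "(E2 has_real_derivative (if t \<le> A then F3 (U t, V t, W t) else F3 (u t, v t, E t))) (at t within {A-h<..0})"
      using glue[OF aA A0 dW DE[unfolded I_def] epE t] unfolding E2_def .
    thus ?thesis unfolding u2_def v2_def E2_def by (cases "t \<le> A") auto
  qed
  have "is_sol \<delta> (A - h) u2 v2 E2"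
    unfolding is_sol_def using g1 g2 g3 unfolding F2_def F3_def HH_def by (auto simp: power2_eq_square)
  moreover have "\<forall>s\<in>{A<..0}. u2 s = u s \<and> v2 s = v s \<and> E2 s = E s"
    unfolding u2_def v2_def E2_def by auto
  ultimately show False using maxl aA unfolding maximal_left_def by blast
qed

end

lemma abs_le_1sq: "\<bar>x::real\<bar> \<le> 1 + x * x"
proof -
  have "0 \<le> (\<bar>x\<bar> - 1) * (\<bar>x\<bar> - 1)" by simp
  hence "0 \<le> \<bar>x\<bar> * \<bar>x\<bar> - 2 * \<bar>x\<bar> + 1" by (simp add: algebra_simps)
  moreover have "\<bar>x\<bar> * \<bar>x\<bar> = x * x" by (simp add: abs_mult_self_eq)
  ultimately show ?thesis by linarith
qed

lemma gr_bound1: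
  fixes X B' E :: real
  assumes X: "X \<ge> 0" and B': "B' \<ge> 0" and EB: "E \<le> B'"
  shows "2 * X * (1 + E * X) \<le> ((2 + 2 * B') * (1 + X))\<^sup>2"
proof -
  have "E * X \<le> B' * X" using EB X by (rule mult_right_mono)
  hence "2 * X * (1 + E * X) \<le> 2 * X * (1 + B' * X)" using X by (intro mult_left_mono) auto
  also have "\<dots> \<le> (2 + 2 * B') * ((1 + X) * (1 + X))"
  proof -
    have eq: "(2 + 2 * B') * ((1 + X) * (1 + X)) = 2 * X * (1 + B' * X) + (2 + 2 * B' + 2 * X + 2 * (X * X) + 4 * (B' * X))"
      by (simp add: algebra_simps)
    have nn: "0 \<le> 2 + 2 * B' + 2 * X + 2 * (X * X) + 4 * (B' * X)"
      by (intro add_nonneg_nonneg mult_nonneg_nonneg) (use X B' in auto)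
    show ?thesis using eq nn by linarith
  qed
  also have "\<dots> \<le> (2 + 2 * B') * (2 + 2 * B') * ((1 + X) * (1 + X))"
  proof -
    have "1 * (2 + 2 * B') \<le> (2 + 2 * B') * (2 + 2 * B')" using B' by (intro mult_right_mono) auto
    thus ?thesis using X by (intro mult_right_mono) auto
  qed
  finally show ?thesis by (simp add: power2_eq_square algebra_simps)
qed


theorem lemma9p2:
  fixes \<delta> \<delta>' :: "real \<Rightarrow> real" and A :: real and u v E :: "real \<Rightarrow> real"
  assumes nonneg: "\<forall>r>0. \<delta> r \<ge> 0"
    and bounded: "\<exists>K. \<forall>r>0. \<bar>\<delta> r\<bar> \<le> K"
    and deriv: "\<forall>r>0. (\<delta> has_real_derivative \<delta>' r) (at r)"
    and cont_deriv: "continuous_on {0<..} \<delta>'"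
    and lim0: "((\<lambda>r. sqrt r * \<delta>' r) \<longlongrightarrow> 0) (at_right 0)"
    and A_neg: "A < 0"
    and sol: "is_sol \<delta> A u v E"
    and onM: "on_M A u v E"
    and maxl: "maximal_left \<delta> A u v E"
  shows "\<exists>s1\<in>{A<..0}. \<forall>s\<in>{A<..s1}. v s * u s < 0"
proof -
  obtain K where K: "\<forall>r>0. \<bar>\<delta> r\<bar> \<le> K" using bounded by auto
  interpret delta_ok \<delta> \<delta>' K using nonneg K deriv cont_deriv lim0 by unfold_locales auto
  define I where "I = {A<..0}"
  note Du = sol_unfold(1)[OF sol, folded I_def]
  note Dv = sol_unfold(2)[OF sol, folded I_def]
  note DE = sol_unfold(3)[OF sol, folded I_def]
  have M: "2 * (v s * v s) - E s * (u s * u s) = 1" if "s \<in> I" for s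
    using onM that unfolding on_M_def I_def by (simp add: power2_eq_square)
  have HHb: "0 \<le> HH x" "HH x \<le> K" for x unfolding HH_def by (auto intro: dext_nonneg dext_le)
  have F3nonpos: "F3 (u s, v s, E s) \<le> 0" for s
    unfolding F3_def using HHb[of "u s"] by (simp add: mult_nonneg_nonneg)
  have Eanti: "E t \<le> E s" if "s \<in> I" "t \<in> I" "s \<le> t" for s t
    using anti_oc[OF DE[unfolded I_def], of s t] F3nonpos that unfolding I_def by auto
  have I0: "0 \<in> I" unfolding I_def using A_neg by auto
  show ?thesis
  proof (rule ccontr)
    assume NC: "\<not> ?thesis"
    have NC': "\<exists>s\<in>{A<..s1}. v s * u s \<ge> 0" if "s1 \<in> I" for s1
      using NC that unfolding I_def by (auto simp: not_less)
    show False
    proof (cases "\<exists>B. \<forall>s\<in>I. E s \<le> B")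
      case True
      then obtain B where B: "\<forall>s\<in>I. E s \<le> B" by auto
      define B' where "B' = max B 0"
      define C where "C = 2 + 2 * B'"
      have B'0: "B' \<ge> 0" and C0: "C \<ge> 0" unfolding B'_def C_def by auto
      have Dg: "\<forall>x\<in>{A<..0}. ((\<lambda>s. 1 + u s * u s) has_real_derivative (2 * u x * v x)) (at x within {A<..0})"
        using Du unfolding I_def by (auto intro!: derivative_eq_intros)
      have gC: "\<forall>x\<in>{A<..0}. \<bar>2 * u x * v x\<bar> \<le> C * (1 + u x * u x)"
      proof
        fix x assume x: "x \<in> {A<..0}"
        have "(2 * u x * v x)\<^sup>2 = 2 * (u x * u x) * (2 * (v x * v x))"
          by (simp add: power2_eq_square algebra_simps)
        also have "2 * (v x * v x) = 1 + E x * (u x * u x)"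
          using M[of x] x unfolding I_def by simp
        finally have "(2 * u x * v x)\<^sup>2 = 2 * (u x * u x) * (1 + E x * (u x * u x))" .
        also have "\<dots> \<le> (C * (1 + u x * u x))\<^sup>2" unfolding C_def
        proof (rule gr_bound1)
          have xI: "x \<in> I" using x unfolding I_def .
          show "E x \<le> B'" using bspec[OF B xI] unfolding B'_def by (simp add: le_max_iff_disj)
        qed (use B'0 in auto)
        finally have "\<bar>2 * u x * v x\<bar>\<^sup>2 \<le> (C * (1 + u x * u x))\<^sup>2" by simp
        thus "\<bar>2 * u x * v x\<bar> \<le> C * (1 + u x * u x)"
          by (rule power2_le_imp_le) (use C0 in simp)
      qed
      define G1 where "G1 = (1 + u 0 * u 0) * exp (C * (0 - A))"
      have g1: "1 + u s * u s \<le> G1" if "s \<in> I" for s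
        unfolding G1_def
        by (rule gronwall_oc[OF Dg _ gC C0]) (use that in \<open>auto simp: I_def add_pos_nonneg\<close>)
      have bu: "\<bar>u s\<bar> \<le> G1" if "s \<in> I" for s using abs_le_1sq[of "u s"] g1[OF that] by linarith
      have bv: "\<bar>v s\<bar> \<le> 1 + (1 + B' * G1) / 2" if "s \<in> I" for s
      proof -
        have "E s * (u s * u s) \<le> B' * (u s * u s)"
          using B that by (intro mult_right_mono) (auto simp: B'_def)
        also have "\<dots> \<le> B' * G1" using g1[OF that] B'0 by (intro mult_left_mono) auto
        finally have "2 * (v s * v s) \<le> 1 + B' * G1" using M[OF that] by linarith
        hence "v s * v s \<le> (1 + B' * G1) / 2" by simp
        thus ?thesis using abs_le_1sq[of "v s"] by linarith
      qed
      have bE: "\<bar>E s\<bar> \<le> \<bar>E 0\<bar> + \<bar>B\<bar>" if "s \<in> I" for s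
      proof -
        have "s \<le> 0" using that unfolding I_def by auto
        thus ?thesis using Eanti[OF that I0] bspec[OF B that] by linarith
      qed
      have G1pos: "G1 \<ge> 0" using g1[OF I0] by (smt (verit) zero_le_square mult_nonneg_nonneg)
      define Bt where "Bt = G1 + (1 + (1 + B' * G1) / 2) + (\<bar>E 0\<bar> + \<bar>B\<bar>)"
      have "\<forall>s\<in>{A<..0}. \<bar>u s\<bar> \<le> Bt \<and> \<bar>v s\<bar> \<le> Bt \<and> \<bar>E s\<bar> \<le> Bt"
      proof
        fix s assume s: "s \<in> {A<..0}"
        have "0 \<le> B' * G1" using B'0 G1pos by simp
        thus "\<bar>u s\<bar> \<le> Bt \<and> \<bar>v s\<bar> \<le> Bt \<and> \<bar>E s\<bar> \<le> Bt"
          using bu[of s] bv[of s] bE[of s] s G1pos unfolding Bt_def I_def by auto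
      qed
      thus False using ext_contra[OF A_neg sol maxl] by blast
    next
      case False
      hence unb: "\<forall>B. \<exists>s\<in>I. E s > B" by (auto simp: not_le)
      then obtain s0 where s0: "s0 \<in> I" "E s0 > 0" by auto
      define J where "J = {A<..s0}"
      have JI: "J \<subseteq> I" unfolding J_def I_def using s0 unfolding I_def by auto
      have s0J: "s0 \<in> J" using s0 unfolding J_def I_def by auto
      have Epos: "E s > 0" if "s \<in> J" for s
        using Eanti[of s s0] that s0 JI unfolding J_def by force
      have vnz: "v s \<noteq> 0" if "s \<in> J" for s
      proof
        assume "v s = 0"
        hence "E s * (u s * u s) = -1" using M[of s] that JI by auto
        moreover have "E s * (u s * u s) \<ge> 0" using Epos[OF that] by simp
        ultimately show False by simp
      qed
      define \<sigma> where "\<sigma> = sgn (v s0)"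
      have \<sigma>sq: "\<sigma> * \<sigma> = 1" and \<sigma>abs: "\<bar>\<sigma>\<bar> = 1" using vnz[OF s0J] unfolding \<sigma>_def by (auto simp: sgn_if)
      have \<sigma>s0: "\<sigma> * v s0 > 0" using vnz[OF s0J] unfolding \<sigma>_def by (auto simp: sgn_if)
      have vcont: "continuous_on I v" using oc_continuous[OF Dv[unfolded I_def]] unfolding I_def .
      have sgnv: "\<sigma> * v s > 0" if s: "s \<in> J" for s
      proof (rule ccontr)
        assume "\<not> \<sigma> * v s > 0"
        hence le: "\<sigma> * v s \<le> 0" by simp
        have ss0: "s \<le> s0" using s unfolding J_def by auto
        have "continuous_on {s..s0} (\<lambda>t. \<sigma> * v t)"
          by (intro continuous_intros continuous_on_subset[OF vcont]) (use s JI s0 in \<open>auto simp: J_def I_def\<close>)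
        then obtain x where x: "s \<le> x" "x \<le> s0" "\<sigma> * v x = 0"
          using IVT'[of "\<lambda>t. \<sigma> * v t" s 0 s0] le \<sigma>s0 ss0 by auto
        have "x \<in> J" using x s unfolding J_def by auto
        moreover have "v x = 0" using x(3) \<sigma>sq by (metis mult_zero_right mult.assoc mult_1)
        ultimately show False using vnz by blast
      qed
      have Dw: "\<forall>x\<in>{A<..s0}. ((\<lambda>t. \<sigma> * u t) has_real_derivative \<sigma> * v x) (at x within {A<..s0})"
      proof
        fix x assume x: "x \<in> {A<..s0}"
        hence "(u has_real_derivative v x) (at x within I)" using Du JI unfolding J_def by auto
        hence "(u has_real_derivative v x) (at x within {A<..s0})" by (rule DERIV_subset) (use JI in \<open>simp add: J_def\<close>)
        thus "((\<lambda>t. \<sigma> * u t) has_real_derivative \<sigma> * v x) (at x within {A<..s0})" by (rule DERIV_cmult)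
      qed
      have wmono: "\<sigma> * u s \<le> \<sigma> * u t" if "s \<in> J" "t \<in> J" "s \<le> t" for s t
      proof (rule mono_oc[OF Dw])
        show "\<forall>x\<in>{A<..s0}. 0 \<le> \<sigma> * v x" using sgnv unfolding J_def by (auto intro: less_imp_le)
      qed (use that in \<open>auto simp: J_def\<close>)
      have wnn: "\<sigma> * u t \<ge> 0" if t: "t \<in> J" for t
      proof -
        have tI: "t \<in> I" using t JI by auto
        obtain s where s: "s \<in> {A<..t}" "v s * u s \<ge> 0" using NC'[OF tI] by blast
        have sJ: "s \<in> J" using s t unfolding J_def by auto
        have "(\<sigma> * v s) * (\<sigma> * u s) = v s * u s" using \<sigma>sq by (simp add: algebra_simps)
        hence "(\<sigma> * v s) * (\<sigma> * u s) \<ge> 0" using s(2) by linarith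
        hence "\<sigma> * u s \<ge> 0" using sgnv[OF sJ] by (simp add: zero_le_mult_iff)
        thus ?thesis using wmono[OF sJ t] s by auto
      qed
      have ub: "\<bar>u t\<bar> \<le> \<bar>u s0\<bar>" if t: "t \<in> J" for t
      proof -
        have "\<bar>u t\<bar> = \<sigma> * u t" using wnn[OF t] \<sigma>abs by (metis abs_mult abs_of_nonneg mult_1)
        also have "\<dots> \<le> \<sigma> * u s0" using wmono[OF t s0J] t unfolding J_def by auto
        also have "\<dots> = \<bar>u s0\<bar>" using wnn[OF s0J] \<sigma>abs by (metis abs_mult abs_of_nonneg mult_1)
        finally show ?thesis .
      qed
      define Wc where "Wc = 1 + u s0 * u s0"
      have Wc1: "Wc \<ge> 1" unfolding Wc_def by simp
      have usq: "u t * u t \<le> Wc" if "t \<in> J" for t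
      proof -
        have "\<bar>u t\<bar> * \<bar>u t\<bar> \<le> \<bar>u s0\<bar> * \<bar>u s0\<bar>" using ub[OF that] by (intro mult_mono) auto
        thus ?thesis unfolding Wc_def by (simp add: abs_mult_self_eq)
      qed
      define C where "C = 2 * Wc * K"
      have C0: "C \<ge> 0" unfolding C_def using Wc1 K_nonneg by simp
      have Dg: "\<forall>x\<in>{A<..s0}. ((\<lambda>t. 1 + Wc * E t) has_real_derivative (Wc * F3 (u x, v x, E x))) (at x within {A<..s0})"
      proof
        fix x assume x: "x \<in> {A<..s0}"
        hence "(E has_real_derivative F3 (u x, v x, E x)) (at x within I)" using DE JI unfolding J_def by auto
        hence "(E has_real_derivative F3 (u x, v x, E x)) (at x within {A<..s0})" by (rule DERIV_subset) (use JI in \<open>simp add: J_def\<close>)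
        thus "((\<lambda>t. 1 + Wc * E t) has_real_derivative (Wc * F3 (u x, v x, E x))) (at x within {A<..s0})"
          by (auto intro!: derivative_eq_intros)
      qed
      have gC: "\<forall>x\<in>{A<..s0}. \<bar>Wc * F3 (u x, v x, E x)\<bar> \<le> C * (1 + Wc * E x)"
      proof
        fix x assume x: "x \<in> {A<..s0}"
        hence xJ: "x \<in> J" unfolding J_def by auto
        have "\<bar>Wc * F3 (u x, v x, E x)\<bar> = Wc * (4 * HH (u x) * (v x * v x))"
          unfolding F3_def using Wc1 HHb[of "u x"] by (simp add: abs_mult)
        also have "\<dots> \<le> Wc * (4 * K * (v x * v x))"
          using Wc1 HHb[of "u x"] by (intro mult_left_mono mult_right_mono) auto
        also have "\<dots> = Wc * (2 * K * (1 + E x * (u x * u x)))" using M[of x] xJ JI by auto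
        also have "\<dots> \<le> Wc * (2 * K * (1 + E x * Wc))"
          using Wc1 K_nonneg Epos[OF xJ] usq[OF xJ] by (intro mult_left_mono add_left_mono) auto
        finally show "\<bar>Wc * F3 (u x, v x, E x)\<bar> \<le> C * (1 + Wc * E x)" unfolding C_def by (simp add: algebra_simps)
      qed
      define G2 where "G2 = (1 + Wc * E s0) * exp (C * (s0 - A))"
      have g2: "1 + Wc * E t \<le> G2" if "t \<in> J" for t
        unfolding G2_def
      proof (rule gronwall_oc[OF Dg _ gC C0])
        show "\<forall>x\<in>{A<..s0}. 0 < 1 + Wc * E x"
        proof
          fix x assume "x \<in> {A<..s0}"
          hence "E x > 0" using Epos unfolding J_def by auto
          hence "Wc * E x > 0" using Wc1 by simp
          thus "0 < 1 + Wc * E x" by linarith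
        qed
      qed (use that in \<open>auto simp: J_def\<close>)
      have EJ: "E t \<le> G2" if "t \<in> J" for t
      proof -
        have "E t \<le> Wc * E t" using Wc1 Epos[OF that] by simp
        thus ?thesis using g2[OF that] by linarith
      qed
      have "E t \<le> G2" if "t \<in> I" for t
      proof (cases "t \<le> s0")
        case True thus ?thesis using EJ that unfolding J_def I_def by auto
      next
        case False
        hence "E t \<le> E s0" using Eanti[OF s0(1) that] by auto
        thus ?thesis using EJ[OF s0J] by linarith
      qed
      thus False using unb by (meson not_le)
    qed
  qed
qed

end
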